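(* Let $q\ge 1$ be an integer and consider an instance of \textsc{Min-Lin-Eq$(q)$-Full} on the complete graph $G=(V,E)$ with $n=|V|$ vertices, given by integers $c_{uv}\in\{0,\dots,q-1\}$ for every ordered pair of distinct vertices with $c_{vu}\equiv -c_{uv}\pmod q$. Let $\mathrm{OPT_{val}}$ be the minimum, over all assignments $x:V\to\{0,\dots,q-1\}$, of the number of edges $uv$ whose constraint $x_u-x_v\equiv c_{uv}\pmod q$ is violated. Run the Pivot Algorithm: choose a pivot $p\in V$ uniformly at random, set $\ell(p)=0$ and $\ell(v)=c_{vp}$ for every $v\neq p$. Then the Pivot Algorithm is a $3$-approximation algorithm for this problem, i.e. the expected number of edges whose constraints are violated by the labeling $\ell$ is at most $3\cdot \mathrm{OPT_{val}}$.
   Context: \textsc{Min-Lin-Eq$(q)$-Full}: given a complete simple graph $G=(V,E)$, a positive integer $q$, and for each ordered pair $(u,v)$ of distinct vertices an integer $c_{uv}\in[q]=\{0,\dots,q-1\}$ with $c_{vu}=q-c_{uv}\bmod q$, each edge $uv$ carries the constraint $x_u-x_v\equiv c_{uv}\pmod q$ on an assignment $x:V\to[q]$. The goal is to find a minimum-cardinality set of edges whose deletion leaves a satisfiable set of constraints, equivalently an assignment minimizing the number of violated edge constraints. *)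

theory Defs
  imports Complex_Main "HOL-Number_Theory.Cong"
begin

definition valid_instance :: "'a set \<Rightarrow> int \<Rightarrow> ('a \<Rightarrow> 'a \<Rightarrow> int) \<Rightarrow> bool" where
  "valid_instance V q c \<longleftrightarrow> finite V \<and> q \<ge> 1 \<and>
     (\<forall>u\<in>V. \<forall>v\<in>V. u \<noteq> v \<longrightarrow> c u v \<in> {0..<q} \<and> [c v u = - c u v] (mod q))"

definition edges :: "'a set \<Rightarrow> 'a set set" where
  "edges V = {{u, v} | u v. u \<in> V \<and> v \<in> V \<and> u \<noteq> v}"

definition violated :: "int \<Rightarrow> ('a \<Rightarrow> 'a \<Rightarrow> int) \<Rightarrow> ('a \<Rightarrow> int) \<Rightarrow> 'a \<Rightarrow> 'a \<Rightarrow> bool" where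
  "violated q c x u v \<longleftrightarrow> \<not> [x u - x v = c u v] (mod q)"

text \<open>Number of edges whose constraint is violated by the assignment x.
  (By antisymmetry of c, violated q c x u v and violated q c x v u agree.)\<close>
definition cost :: "'a set \<Rightarrow> int \<Rightarrow> ('a \<Rightarrow> 'a \<Rightarrow> int) \<Rightarrow> ('a \<Rightarrow> int) \<Rightarrow> nat" where
  "cost V q c x = card {e \<in> edges V. \<exists>u v. e = {u, v} \<and> u \<noteq> v \<and> violated q c x u v}"

definition assignments :: "'a set \<Rightarrow> int \<Rightarrow> ('a \<Rightarrow> int) set" where
  "assignments V q = {x. (\<forall>v\<in>V. x v \<in> {0..<q}) \<and> (\<forall>v. v \<notin> V \<longrightarrow> x v = 0)}"

definition OPT_val :: "'a set \<Rightarrow> int \<Rightarrow> ('a \<Rightarrow> 'a \<Rightarrow> int) \<Rightarrow> nat" where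
  "OPT_val V q c = Min (cost V q c ` assignments V q)"

definition pivot_label :: "('a \<Rightarrow> 'a \<Rightarrow> int) \<Rightarrow> 'a \<Rightarrow> 'a \<Rightarrow> int" where
  "pivot_label c p v = (if v = p then 0 else c v p)"

definition expected_pivot_cost :: "'a set \<Rightarrow> int \<Rightarrow> ('a \<Rightarrow> 'a \<Rightarrow> int) \<Rightarrow> real" where
  "expected_pivot_cost V q c = (\<Sum>p\<in>V. real (cost V q c (pivot_label c p))) / real (card V)"

end

theory Submission
  imports Defs
begin

lemma pairs_sub: "{(p,w). {w,p} = {a,b}} \<subseteq> {(a,b),(b,a)}"
proof
  fix z assume "z \<in> {(p,w). {w,p} = {a,b}}"
  then obtain p w where z: "z = (p,w)" "{w,p} = {a,b}" by blast
  hence "w = a \<and> p = b \<or> w = b \<and> p = a" by (simp only: doubleton_eq_iff)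
  thus "z \<in> {(a,b),(b,a)}" using z(1) by auto
qed

lemma card2: "card {x, y} \<le> (2::nat)" by (cases "x = y") simp_all

definition Bad where
  "Bad V q c x = {e \<in> edges V. \<exists>u v. e = {u, v} \<and> u \<noteq> v \<and> violated q c x u v}"

lemma finite_edges: "finite V \<Longrightarrow> finite (edges V)"
proof -
  assume "finite V"
  have "edges V \<subseteq> Pow V" unfolding edges_def by auto
  thus ?thesis using \<open>finite V\<close> by (meson finite_Pow_iff finite_subset)
qed

lemma inBad: "{a,b} \<in> edges V \<Longrightarrow> a \<noteq> b \<Longrightarrow> violated q c x a b \<Longrightarrow> {a,b} \<in> Bad V q c x"
  unfolding Bad_def by blast

lemma pivot_ok:
  assumes val: "valid_instance V q c" and p: "p \<in> V"
  shows "Bad V q c (pivot_label c p) \<subseteq> Bad V q c x \<union>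
     {e \<in> edges V. \<exists>w\<in>V. w \<in> e \<and> {w,p} \<in> Bad V q c x}"
proof
  fix e assume "e \<in> Bad V q c (pivot_label c p)"
  then obtain u v where e: "e \<in> edges V" "e = {u,v}" "u \<noteq> v"
      and vl: "violated q c (pivot_label c p) u v" unfolding Bad_def by blast
  have "e \<subseteq> V" using e(1) unfolding edges_def by blast
  hence uv: "u \<in> V" "v \<in> V" using e(2) by auto
  have qd: "\<And>a b. a \<in> V \<Longrightarrow> b \<in> V \<Longrightarrow> a \<noteq> b \<Longrightarrow> q dvd (c a b + c b a)"
  proof -
    fix a b assume "a \<in> V" "b \<in> V" "a \<noteq> b"
    hence "[c b a = - c a b] (mod q)" using val unfolding valid_instance_def by blast
    hence "q dvd (c b a - - c a b)" by (simp add: cong_iff_dvd_diff)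
    thus "q dvd (c a b + c b a)" by (simp add: add.commute)
  qed
  have "u \<noteq> p"
  proof
    assume "u = p"
    hence "pivot_label c p u - pivot_label c p v - c u v = - (c v p + c p v)"
      using \<open>u \<noteq> v\<close> unfolding pivot_label_def by simp
    moreover have "v \<noteq> p" using \<open>u \<noteq> v\<close> \<open>u = p\<close> by simp
    ultimately have "q dvd (pivot_label c p u - pivot_label c p v - c u v)"
      using qd[OF uv(2) p \<open>v \<noteq> p\<close>] by (simp only: dvd_minus_iff)
    thus False using vl unfolding violated_def by (simp add: cong_iff_dvd_diff)
  qed
  moreover have "v \<noteq> p"
  proof
    assume "v = p"
    hence "pivot_label c p u - pivot_label c p v - c u v = 0"
      using \<open>u \<noteq> v\<close> unfolding pivot_label_def by simp
    thus False using vl unfolding violated_def by (simp add: cong_iff_dvd_diff)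
  qed
  ultimately have lab: "pivot_label c p u = c u p" "pivot_label c p v = c v p"
    unfolding pivot_label_def by auto
  show "e \<in> Bad V q c x \<union> {e \<in> edges V. \<exists>w\<in>V. w \<in> e \<and> {w,p} \<in> Bad V q c x}"
  proof (rule ccontr)
    assume nn: "\<not> ?thesis"
    have eu: "{u,p} \<in> edges V" using uv p \<open>u \<noteq> p\<close> unfolding edges_def by blast
    have ev: "{v,p} \<in> edges V" using uv p \<open>v \<noteq> p\<close> unfolding edges_def by blast
    have n1: "e \<notin> Bad V q c x" using nn by blast
    have n2: "{u,p} \<notin> Bad V q c x" using nn e(1) uv(1) e(2) by blast
    have n3: "{v,p} \<notin> Bad V q c x" using nn e(1) uv(2) e(2) by blast
    have "\<not> violated q c x u v" using n1 e by (auto intro: inBad)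
    moreover have "\<not> violated q c x u p" using n2 eu \<open>u \<noteq> p\<close> by (auto intro: inBad)
    moreover have "\<not> violated q c x v p" using n3 ev \<open>v \<noteq> p\<close> by (auto intro: inBad)
    ultimately have "q dvd (x u - x v - c u v)" "q dvd (x u - x p - c u p)"
        "q dvd (x v - x p - c v p)"
      unfolding violated_def by (simp_all only: cong_iff_dvd_diff not_not)
    note h = this
    have "q dvd ((x u - x p - c u p) - (x v - x p - c v p) - (x u - x v - c u v))"
      by (rule dvd_diff[OF dvd_diff[OF h(2) h(3)] h(1)])
    moreover have eq: "(x u - x p - c u p) - (x v - x p - c v p) - (x u - x v - c u v)
       = - (c u p - c v p - c u v)" by simp
    ultimately have "q dvd - (c u p - c v p - c u v)" by (simp only:)
    hence "q dvd (c u p - c v p - c u v)" by (simp only: dvd_minus_iff)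
    thus False using vl lab unfolding violated_def by (simp add: cong_iff_dvd_diff)
  qed
qed

lemma edges_at: "card {e \<in> edges V. w \<in> e} \<le> card V" if "finite V"
proof -
  have "{e \<in> edges V. w \<in> e} \<subseteq> (\<lambda>v. {w,v}) ` V"
  proof
    fix e assume "e \<in> {e \<in> edges V. w \<in> e}"
    then obtain a b where ab: "e = {a,b}" "a \<in> V" "b \<in> V" "w \<in> e" unfolding edges_def by blast
    show "e \<in> (\<lambda>v. {w,v}) ` V"
    proof (cases "w = a")
      case True thus ?thesis using ab by blast
    next
      case False hence "w = b" using ab by blast
      hence "e = {w,a}" using ab by blast
      thus ?thesis using ab by blast
    qed
  qed
  hence "card {e \<in> edges V. w \<in> e} \<le> card ((\<lambda>v. {w,v}) ` V)"
    using that by (simp add: card_mono)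
  also have "\<dots> \<le> card V" using card_image_le that by blast
  finally show ?thesis .
qed

lemma per_pivot:
  assumes val: "valid_instance V q c" and p: "p \<in> V"
  shows "cost V q c (pivot_label c p) \<le> cost V q c x + card V * card {w\<in>V. {w,p} \<in> Bad V q c x}"
proof -
  have fin: "finite V" using val unfolding valid_instance_def by blast
  have fe: "finite (edges V)" using finite_edges fin by blast
  let ?W = "{w\<in>V. {w,p} \<in> Bad V q c x}"
  have S: "{e \<in> edges V. \<exists>w\<in>V. w \<in> e \<and> {w,p} \<in> Bad V q c x} \<subseteq> (\<Union>w\<in>?W. {e \<in> edges V. w \<in> e})"
    by blast
  have "card {e \<in> edges V. \<exists>w\<in>V. w \<in> e \<and> {w,p} \<in> Bad V q c x} \<le> card (\<Union>w\<in>?W. {e \<in> edges V. w \<in> e})"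
    by (rule card_mono[OF _ S], rule finite_subset[OF _ fe]) blast
  also have "\<dots> \<le> (\<Sum>w\<in>?W. card {e \<in> edges V. w \<in> e})" by (rule card_UN_le) (use fin in auto)
  also have "\<dots> \<le> (\<Sum>w\<in>?W. card V)" by (rule sum_mono) (use edges_at fin in auto)
  also have "\<dots> = card V * card ?W" by simp
  finally have A: "card {e \<in> edges V. \<exists>w\<in>V. w \<in> e \<and> {w,p} \<in> Bad V q c x} \<le> card V * card ?W" .
  have "cost V q c (pivot_label c p) = card (Bad V q c (pivot_label c p))"
    unfolding cost_def Bad_def by simp
  also have "\<dots> \<le> card (Bad V q c x \<union> {e \<in> edges V. \<exists>w\<in>V. w \<in> e \<and> {w,p} \<in> Bad V q c x})"
    by (rule card_mono[OF _ pivot_ok[OF val p]]) (use fe in \<open>auto simp: Bad_def\<close>)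
  also have "\<dots> \<le> card (Bad V q c x) + card {e \<in> edges V. \<exists>w\<in>V. w \<in> e \<and> {w,p} \<in> Bad V q c x}"
    by (rule card_Un_le)
  also have "\<dots> \<le> cost V q c x + card V * card ?W" using A unfolding cost_def Bad_def by simp
  finally show ?thesis .
qed

lemma sum_W:
  assumes val: "valid_instance V q c"
  shows "(\<Sum>p\<in>V. card {w\<in>V. {w,p} \<in> Bad V q c x}) \<le> 2 * cost V q c x"
proof -
  have fin: "finite V" using val unfolding valid_instance_def by blast
  have fe: "finite (edges V)" using finite_edges fin by blast
  have fB: "finite (Bad V q c x)" using fe unfolding Bad_def by simp
  have "(\<Sum>p\<in>V. card {w\<in>V. {w,p} \<in> Bad V q c x}) = card (SIGMA p:V. {w\<in>V. {w,p} \<in> Bad V q c x})"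
    by (rule card_SigmaI[symmetric]) (use fin in auto)
  also have "\<dots> \<le> card (\<Union>f\<in>Bad V q c x. {(p,w). {w,p} = f})"
  proof (rule card_mono)
    show "finite (\<Union>f\<in>Bad V q c x. {(p,w). {w,p} = f})"
    proof (rule finite_UN_I[OF fB])
      fix f assume "f \<in> Bad V q c x"
      then obtain a b where "f = {a,b}" unfolding Bad_def by blast
      hence "{(p,w). {w,p} = f} \<subseteq> {(a,b),(b,a)}" using pairs_sub by simp
      thus "finite {(p,w). {w,p} = f}" using finite_subset by blast
    qed
    show "(SIGMA p:V. {w\<in>V. {w,p} \<in> Bad V q c x}) \<subseteq> (\<Union>f\<in>Bad V q c x. {(p,w). {w,p} = f})"
      by blast
  qed
  also have "\<dots> \<le> (\<Sum>f\<in>Bad V q c x. card {(p,w). {w,p} = f})" by (rule card_UN_le[OF fB])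
  also have "\<dots> \<le> (\<Sum>f\<in>Bad V q c x. 2)"
  proof (rule sum_mono)
    fix f assume "f \<in> Bad V q c x"
    then obtain a b where "f = {a,b}" unfolding Bad_def by blast
    hence s: "{(p,w). {w,p} = f} \<subseteq> {(a,b),(b,a)}" using pairs_sub by simp
    have "card {(p,w). {w,p} = f} \<le> card {(a,b),(b,a)}" by (rule card_mono[OF _ s]) auto
    also have "\<dots> \<le> 2" by (rule card2)
    finally show "card {(p,w). {w,p} = f} \<le> 2" .
  qed
  also have "\<dots> = 2 * cost V q c x" unfolding cost_def Bad_def by simp
  finally show ?thesis .
qed

theorem theorem1:
  fixes V :: "'a set" and q :: int and c :: "'a \<Rightarrow> 'a \<Rightarrow> int"
  assumes "valid_instance V q c" and "V \<noteq> {}"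
  shows "expected_pivot_cost V q c \<le> 3 * real (OPT_val V q c)"
proof -
  have val: "valid_instance V q c" by fact
  have fin: "finite V" and q1: "q \<ge> 1" using val unfolding valid_instance_def by auto
  have fe: "finite (edges V)" using finite_edges fin by blast
  have sub: "cost V q c ` assignments V q \<subseteq> {..card (edges V)}"
    unfolding cost_def using fe by (auto intro!: card_mono)
  have "(\<lambda>v. 0) \<in> assignments V q" unfolding assignments_def using q1 by auto
  hence ne: "cost V q c ` assignments V q \<noteq> {}" by blast
  have "OPT_val V q c \<in> cost V q c ` assignments V q"
    unfolding OPT_val_def by (rule Min_in[OF finite_subset[OF sub] ne]) simp
  then obtain x where x: "cost V q c x = OPT_val V q c" by auto
  let ?n = "card V"
  have npos: "?n > 0" using fin assms(2) by (simp add: card_gt_0_iff)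
  have "(\<Sum>p\<in>V. cost V q c (pivot_label c p)) \<le>
        (\<Sum>p\<in>V. cost V q c x + ?n * card {w\<in>V. {w,p} \<in> Bad V q c x})"
    by (rule sum_mono) (rule per_pivot[OF val])
  also have "\<dots> = ?n * cost V q c x + ?n * (\<Sum>p\<in>V. card {w\<in>V. {w,p} \<in> Bad V q c x})"
    by (simp add: sum.distrib sum_distrib_left)
  also have "\<dots> \<le> ?n * cost V q c x + ?n * (2 * cost V q c x)"
    using sum_W[OF val, of x] by simp
  finally have N: "(\<Sum>p\<in>V. cost V q c (pivot_label c p)) \<le> 3 * ?n * OPT_val V q c"
    using x by simp
  have "(\<Sum>p\<in>V. real (cost V q c (pivot_label c p))) \<le> real (3 * ?n * OPT_val V q c)"
    using N by (metis of_nat_le_iff of_nat_sum)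
  hence "(\<Sum>p\<in>V. real (cost V q c (pivot_label c p))) \<le> 3 * real (OPT_val V q c) * real ?n"
    by (simp add: mult_ac)
  thus ?thesis unfolding expected_pivot_cost_def using npos
    by (simp add: divide_le_eq)
qed

end
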